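(* Let $X\subset\overline{\mathbb{R}}$ and $Y\subset[0,1]$ be finite sets with $|Y|\le|X|+1$ and $\{0,1\}\subset Y$. Let $\mathcal{F}(X,Y)$ be the set of cumulative distribution functions with atoms in $X$ and cumulative probabilities in $Y$, i.e. nondecreasing maps $F:X\to Y$ with $F(\max X)=1$ (where $F$ corresponds to the distribution assigning probability $F(x_i)-F(x_{i-1})$ to $x_i$, with $X=\{x_1<\cdots<x_{|X|}\}$ and $F(x_0):=0$). For $F\in\mathcal{F}(X,Y)$, let $H(F)$ be the Shannon entropy of this distribution. Then $F\in\arg\max_{F'\in\mathcal{F}(X,Y)}H(F')$ if and only if $F(X)\cup\{0\}=Y$.
   Context: $\overline{\mathbb{R}}=\mathbb{R}\cup\{-\infty,+\infty,\bot\}$ with the strict linear order $-\infty<x<x'<+\infty<\bot$ for reals $x<x'$. Shannon entropy of a discrete distribution $(p_i)$ is $-\sum_i p_i\log_2 p_i$ (with $0\log_2 0=0$). *)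

theory Defs
  imports Complex_Main "HOL-Library.Extended_Real" "HOL-Library.FuncSet"
begin

text \<open>The extended real line with an extra top element Bot (written \<bottom> in the paper):
  -\<infinity> < reals < +\<infinity> < Bot.\<close>
datatype rbar = Ext ereal | Bot

instantiation rbar :: linorder
begin
fun less_eq_rbar :: "rbar \<Rightarrow> rbar \<Rightarrow> bool" where
  "less_eq_rbar (Ext a) (Ext b) = (a \<le> b)"
| "less_eq_rbar _ Bot = True"
| "less_eq_rbar Bot (Ext _) = False"
definition less_rbar :: "rbar \<Rightarrow> rbar \<Rightarrow> bool" where
  "less_rbar a b = (a \<le> b \<and> \<not> b \<le> a)"
instance
proof
  fix x y z :: rbar
  show "(x < y) = (x \<le> y \<and> \<not> y \<le> x)" by (simp add: less_rbar_def)
  show "x \<le> x" by (cases x) auto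
  show "x \<le> y \<Longrightarrow> y \<le> z \<Longrightarrow> x \<le> z" by (cases x; cases y; cases z) auto
  show "x \<le> y \<Longrightarrow> y \<le> x \<Longrightarrow> x = y" by (cases x; cases y) auto
  show "x \<le> y \<or> y \<le> x" by (cases x; cases y) auto
qed
end

definition cdfs :: "rbar set \<Rightarrow> real set \<Rightarrow> (rbar \<Rightarrow> real) set" where
  "cdfs X Y = {F \<in> X \<rightarrow>\<^sub>E Y. mono_on X F \<and> F (Max X) = 1}"

definition pmass :: "rbar set \<Rightarrow> (rbar \<Rightarrow> real) \<Rightarrow> rbar \<Rightarrow> real" where
  "pmass X F x = F x - (if {y \<in> X. y < x} = {} then 0 else F (Max {y \<in> X. y < x}))"

definition entropy :: "rbar set \<Rightarrow> (rbar \<Rightarrow> real) \<Rightarrow> real" where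
  "entropy X F = - (\<Sum>x\<in>X. (if pmass X F x = 0 then 0 else pmass X F x * log 2 (pmass X F x)))"

end

theory Submission
  imports Defs
begin

definition phi :: "real \<Rightarrow> real" where "phi p = (if p = 0 then 0 else p * log 2 p)"
definition prd :: "real set \<Rightarrow> real \<Rightarrow> real" where
  "prd S v = (if {t\<in>S. t<v} = {} then 0 else Max {t\<in>S. t<v})"
definition G :: "real set \<Rightarrow> real" where "G S = (\<Sum>v\<in>S. phi (v - prd S v))"

lemma phi_strict:
  assumes "p > 0" "q > 0" shows "phi p + phi q < phi (p+q)"
proof -
  have a: "log 2 p < log 2 (p+q)" "log 2 q < log 2 (p+q)" using assms by auto
  have "p * log 2 p < p * log 2 (p+q)" using a assms by (simp add: mult_strict_left_mono)
  moreover have "q * log 2 q < q * log 2 (p+q)" using a assms by (simp add: mult_strict_left_mono)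
  ultimately have "p * log 2 p + q * log 2 q < p * log 2 (p+q) + q * log 2 (p+q)" by linarith
  then show ?thesis using assms unfolding phi_def by (simp add: algebra_simps)
qed

lemma G_insert:
  assumes fin: "finite S" and aS: "a \<notin> S" and lS: "l \<in> S" "l < a" and uS: "u \<in> S" "a < u"
    and bl: "\<forall>t\<in>S. t < a \<longrightarrow> t \<le> l" and bu: "\<forall>t\<in>S. t > a \<longrightarrow> u \<le> t"
  shows "G (insert a S) = G S - phi (u - l) + phi (a - l) + phi (u - a)"
proof -
  have p1: "prd (insert a S) a = l"
  proof -
    have "{t\<in>insert a S. t<a} = {t\<in>S. t<a}" by auto
    moreover have "Max {t\<in>S. t<a} = l" using lS bl fin by (intro Max_eqI) auto
    ultimately show ?thesis unfolding prd_def using lS by auto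
  qed
  have p2: "prd (insert a S) u = a"
  proof -
    have "Max {t\<in>insert a S. t<u} = a" using uS bu fin by (intro Max_eqI) force+
    then show ?thesis unfolding prd_def using uS by auto
  qed
  have p3: "prd S u = l"
  proof -
    have "Max {t\<in>S. t<u} = l" using lS uS bl bu aS fin
      by (intro Max_eqI) (auto, metis linorder_neqE_linordered_idom not_le)
    then show ?thesis unfolding prd_def using lS uS by auto
  qed
  have p4: "prd (insert a S) v = prd S v" if v: "v \<in> S" "v \<noteq> u" for v
  proof (cases "v \<le> a")
    case True
    then have "{t\<in>insert a S. t<v} = {t\<in>S. t<v}" by auto
    then show ?thesis unfolding prd_def by presburger
  next
    case False
    then have vu: "u < v" using bu v by force
    have e: "{t\<in>insert a S. t<v} = insert a {t\<in>S. t<v}" using False by auto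
    have ne: "{t\<in>S. t<v} \<noteq> {}" using vu uS by auto
    have fA: "finite {t\<in>S. t<v}" using fin by auto
    have "u \<le> Max {t\<in>S. t<v}" using vu uS fA by (intro Max_ge) auto
    then have "Max (insert a {t\<in>S. t<v}) = Max {t\<in>S. t<v}"
      using Max_insert[OF fA ne] uS by auto
    then show ?thesis unfolding prd_def e using ne by auto
  qed
  have "G (insert a S) = phi (a - l) + (\<Sum>v\<in>S. phi (v - prd (insert a S) v))"
    unfolding G_def using fin aS p1 by simp
  also have "(\<Sum>v\<in>S. phi (v - prd (insert a S) v)) = phi (u - a) + (\<Sum>v\<in>S-{u}. phi (v - prd (insert a S) v))"
    using fin uS p2 by (simp add: sum.remove)
  also have "(\<Sum>v\<in>S-{u}. phi (v - prd (insert a S) v)) = (\<Sum>v\<in>S-{u}. phi (v - prd S v))"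
    using p4 by (intro sum.cong) auto
  also have "G S = phi (u - l) + (\<Sum>v\<in>S-{u}. phi (v - prd S v))"
    unfolding G_def using fin uS p3 by (simp add: sum.remove)
  ultimately show ?thesis by simp
qed

lemma G_insert_less:
  assumes "finite S" "S \<subseteq> {0..1}" "0 \<in> S" "1 \<in> S" "a \<in> {0..1}" "a \<notin> S"
  shows "G (insert a S) < G S"
proof -
  have a01: "0 < a" "a < 1" using assms by (auto simp: order.order_iff_strict)
  define L where "L = {t\<in>S. t<a}"
  define U where "U = {t\<in>S. a<t}"
  have L: "finite L" "L \<noteq> {}" "0 \<in> L" using assms a01 by (auto simp: L_def)
  have U: "finite U" "U \<noteq> {}" "1 \<in> U" using assms a01 by (auto simp: U_def)
  define l where "l = Max L"
  define u where "u = Min U"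
  have lL: "l \<in> L" using L l_def by auto
  have uU: "u \<in> U" using U u_def by auto
  have bl: "\<forall>t\<in>S. t < a \<longrightarrow> t \<le> l" using L l_def L_def by auto
  have bu: "\<forall>t\<in>S. t > a \<longrightarrow> u \<le> t" using U u_def U_def by auto
  have g: "G (insert a S) = G S - phi (u - l) + phi (a - l) + phi (u - a)"
    using lL uU bl bu assms by (intro G_insert) (auto simp: L_def U_def)
  have "phi (a - l) + phi (u - a) < phi ((a - l) + (u - a))"
    using lL uU by (intro phi_strict) (auto simp: L_def U_def)
  then show ?thesis using g by simp
qed

lemma G_mono:
  assumes "finite D"
  shows "finite S \<Longrightarrow> S \<subseteq> {0..1} \<Longrightarrow> D \<subseteq> {0..1} \<Longrightarrow> 0 \<in> S \<Longrightarrow> 1 \<in> S \<Longrightarrow> G (S \<union> D) \<le> G S"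
  using assms
proof (induction D arbitrary: S rule: finite_induct)
  case empty
  then show ?case by simp
next
  case (insert a D)
  show ?case
  proof (cases "a \<in> S")
    case True
    then have "S \<union> insert a D = S \<union> D" by auto
    then show ?thesis using insert by simp
  next
    case False
    have e: "S \<union> insert a D = insert a S \<union> D" by auto
    have "G (insert a S \<union> D) \<le> G (insert a S)" using insert by (intro insert.IH) auto
    moreover have "G (insert a S) < G S" using insert False by (intro G_insert_less) auto
    ultimately show ?thesis using e by simp
  qed
qed

lemma G_strict:
  assumes "finite T" "S \<subseteq> T" "S \<noteq> T" "T \<subseteq> {0..1}" "0 \<in> S" "1 \<in> S"
  shows "G T < G S"
proof -
  obtain a where a: "a \<in> T" "a \<notin> S" using assms by auto
  have fS: "finite S" using assms finite_subset by auto
  have "G (insert a S \<union> T) \<le> G (insert a S)"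
    using assms a fS by (intro G_mono) auto
  moreover have "insert a S \<union> T = T" using a assms by auto
  moreover have "G (insert a S) < G S" using assms a fS by (intro G_insert_less) auto
  ultimately show ?thesis by simp
qed

lemma G_zero:
  assumes "finite S" "S \<subseteq> {0..1}"
  shows "G (insert 0 S) = G S"
proof (cases "0 \<in> S")
  case True then show ?thesis by (simp add: insert_absorb)
next
  case False
  have pos: "v \<in> S \<Longrightarrow> v > 0" for v using assms False
    by (metis atLeastAtMost_iff less_eq_real_def subsetD)
  have p0: "prd (insert 0 S) 0 = 0" unfolding prd_def using pos by force
  have pv: "prd (insert 0 S) v = prd S v" if v: "v \<in> S" for v
  proof (cases "{t\<in>S. t<v} = {}")
    case True
    then have "{t\<in>insert 0 S. t<v} = {0}" using pos v by auto
    then show ?thesis unfolding prd_def using True by simp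
  next
    case ne: False
    have e: "{t\<in>insert 0 S. t<v} = insert 0 {t\<in>S. t<v}" using pos v by auto
    have fA: "finite {t\<in>S. t<v}" using assms by auto
    have "Max {t\<in>S. t<v} \<in> S" using Max_in[OF fA ne] by auto
    then have "Max (insert 0 {t\<in>S. t<v}) = Max {t\<in>S. t<v}"
      using Max_insert[OF fA ne] pos by fastforce
    then show ?thesis unfolding prd_def e using ne by auto
  qed
  have "G (insert 0 S) = phi (0 - prd (insert 0 S) 0) + (\<Sum>v\<in>S. phi (v - prd (insert 0 S) v))"
    unfolding G_def using assms False by simp
  also have "\<dots> = G S" using p0 pv unfolding G_def by (simp add: phi_def)
  finally show ?thesis .
qed


lemma sum_fibers:
  assumes fin: "finite X" and mono: "mono_on X F"
  shows "(\<Sum>x\<in>X. phi (pmass X F x)) = G (F ` X)"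
proof -
  have "(\<Sum>x\<in>X. phi (pmass X F x)) = (\<Sum>v\<in>F`X. \<Sum>x\<in>{x\<in>X. F x = v}. phi (pmass X F x))"
    using fin by (rule sum.image_gen)
  also have "\<dots> = (\<Sum>v\<in>F`X. phi (v - prd (F`X) v))"
  proof (rule sum.cong[OF refl])
    fix v assume v: "v \<in> F ` X"
    define A where "A = {x\<in>X. F x = v}"
    have fA: "finite A" "A \<noteq> {}" using fin v by (auto simp: A_def)
    define x0 where "x0 = Min A"
    have x0A: "x0 \<in> A" using fA x0_def by auto
    have x0min: "\<And>x. x \<in> A \<Longrightarrow> x0 \<le> x" using fA x0_def by auto
    have zero: "pmass X F x = 0" if xA: "x \<in> A - {x0}" for x
    proof -
      have lt: "x0 < x" using x0min xA by force
      define L where "L = {y\<in>X. y<x}"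
      have L: "finite L" "x0 \<in> L" using fin lt x0A by (auto simp: L_def A_def)
      have mL: "Max L \<in> L" "x0 \<le> Max L" using L by (auto intro: Max_in)
      have mX: "Max L \<in> X" "Max L < x" using mL by (auto simp: L_def)
      have x0X: "x0 \<in> X" and xX: "x \<in> X" using x0A xA by (auto simp: A_def)
      have "F x0 \<le> F (Max L)" using mono_onD[OF mono x0X mX(1) mL(2)] .
      moreover have "F (Max L) \<le> F x" using mono_onD[OF mono mX(1) xX] mX(2) by simp
      ultimately have "F x0 \<le> F (Max L)" "F (Max L) \<le> F x" by auto
      then have "F (Max L) = v" using x0A xA by (auto simp: A_def)
      then show ?thesis using L xA unfolding pmass_def L_def A_def by auto
    qed
    have first: "pmass X F x0 = v - prd (F`X) v"
    proof -
      have Fx0: "F x0 = v" "x0 \<in> X" using x0A by (auto simp: A_def)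
      have below: "z < x0" if "z \<in> X" "F z < v" for z
      proof (rule ccontr)
        assume "\<not> z < x0"
        then have "x0 \<le> z" by simp
        from mono_onD[OF mono Fx0(2) that(1) this] show False using that Fx0 by simp
      qed
      show ?thesis
      proof (cases "{y\<in>X. y<x0} = {}")
        case True
        then have "{t\<in>F`X. t<v} = {}" using below by auto
        then show ?thesis using True Fx0 unfolding pmass_def prd_def by simp
      next
        case False
        define m where "m = Max {y\<in>X. y<x0}"
        have "m \<in> {y\<in>X. y<x0}" unfolding m_def using False fin by (intro Max_in) auto
        then have m: "m \<in> X" "m < x0" by auto
        have "F m \<le> v" using mono_onD[OF mono m(1) Fx0(2)] m Fx0 by simp
        moreover have "F m \<noteq> v" using m x0min by (force simp: A_def)
        ultimately have Fm: "F m < v" by simp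
        have "Max {t\<in>F`X. t<v} = F m"
        proof (rule Max_eqI)
          show "finite {t\<in>F`X. t<v}" using fin by auto
          show "F m \<in> {t\<in>F`X. t<v}" using Fm m by auto
          fix t assume "t \<in> {t\<in>F`X. t<v}"
          then obtain z where z: "z \<in> X" "t = F z" "F z < v" by auto
          then have "z < x0" using below by auto
          then have "z \<le> m" using z fin unfolding m_def by (intro Max_ge) auto
          then show "t \<le> F m" using mono_onD[OF mono z(1) m(1)] z by simp
        qed
        moreover have "{t\<in>F`X. t<v} \<noteq> {}" using Fm m by auto
        ultimately have "prd (F`X) v = F m" unfolding prd_def by presburger
        moreover have "pmass X F x0 = F x0 - F m" unfolding pmass_def m_def using False by presburger
        ultimately show ?thesis using Fx0 by simp
      qed
    qed
    have "(\<Sum>x\<in>A. phi (pmass X F x)) = phi (pmass X F x0) + (\<Sum>x\<in>A-{x0}. phi (pmass X F x))"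
      using fA x0A by (simp add: sum.remove)
    also have "(\<Sum>x\<in>A-{x0}. phi (pmass X F x)) = 0" using zero by (simp add: phi_def)
    finally show "(\<Sum>x\<in>{x\<in>X. F x = v}. phi (pmass X F x)) = phi (v - prd (F`X) v)"
      using first by (simp add: A_def)
  qed
  finally show ?thesis unfolding G_def .
qed

lemma entropy_G:
  assumes "finite X" "Y \<subseteq> {0..1}" "F \<in> cdfs X Y"
  shows "entropy X F = - G (insert 0 (F ` X))"
proof -
  have F: "mono_on X F" "F ` X \<subseteq> Y" using assms by (auto simp: cdfs_def)
  have "entropy X F = - (\<Sum>x\<in>X. phi (pmass X F x))" unfolding entropy_def phi_def by simp
  also have "\<dots> = - G (F ` X)" using sum_fibers assms F by simp
  also have "G (F ` X) = G (insert 0 (F ` X))" using F assms by (intro G_zero[symmetric]) auto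
  finally show ?thesis .
qed


lemma exists_full:
  assumes finX: "finite X" and neX: "X \<noteq> {}" and finY: "finite Y" and Y01: "Y \<subseteq> {0..1}"
    and Y0: "0 \<in> Y" and Y1: "1 \<in> Y" and card: "card Y \<le> card X + 1"
  shows "\<exists>F \<in> cdfs X Y. insert 0 (F ` X) = Y"
proof -
  define Y' where "Y' = Y - {0}"
  define ys where "ys = sorted_list_of_set Y'"
  define m where "m = length ys"
  define n where "n = card X"
  define r where "r x = card {y\<in>X. y<x}" for x
  have fY': "finite Y'" using finY by (simp add: Y'_def)
  have ys: "set ys = Y'" "sorted ys" "distinct ys" using fY' by (auto simp: ys_def)
  have mc: "m = card Y'" using ys by (simp add: m_def distinct_card[symmetric])
  have cY': "card Y' = card Y - 1" using Y0 finY by (simp add: Y'_def)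
  have mn: "m \<le> n" using mc cY' card by (simp add: n_def)
  have Y'1: "1 \<in> Y'" using Y1 by (simp add: Y'_def)
  have m1: "m \<ge> 1" using mc Y'1 fY' by (metis One_nat_def Suc_leI card_gt_0_iff empty_iff)
  define F where "F x = (if x \<in> X then ys ! min (r x) (m - 1) else undefined)" for x
  have rlt: "r x < n" if "x \<in> X" for x
  proof -
    have "{y\<in>X. y<x} \<subset> X" using that by auto
    then show ?thesis unfolding r_def n_def using finX psubset_card_mono by blast
  qed
  have rmono: "r x \<le> r y" if "x \<le> y" for x y
    unfolding r_def using finX that by (intro card_mono) auto
  have rstrict: "r x < r y" if "x < y" "x \<in> X" for x y
  proof -
    have "{z\<in>X. z<x} \<subset> {z\<in>X. z<y}" using that by auto
    then show ?thesis unfolding r_def using finX by (intro psubset_card_mono) auto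
  qed
  have inj: "inj_on r X"
  proof (rule inj_onI)
    fix x y assume "x \<in> X" "y \<in> X" "r x = r y"
    then show "x = y" using rstrict by (metis less_irrefl linorder_neqE)
  qed
  have rimg: "r ` X = {..<n}"
  proof (rule card_subset_eq)
    show "r ` X \<subseteq> {..<n}" using rlt by auto
    show "card (r ` X) = card {..<n}" using card_image[OF inj] by (simp add: n_def)
  qed simp
  have Fv: "F x \<in> Y'" if "x \<in> X" for x
    using that m1 ys(1) by (auto simp: F_def m_def)
  have FPi: "F \<in> X \<rightarrow>\<^sub>E Y" using Fv by (auto simp: F_def Y'_def)
  have Fmono: "mono_on X F"
  proof (rule mono_onI)
    fix x y assume "x \<in> X" "y \<in> X" "x \<le> y"
    then show "F x \<le> F y" unfolding F_def using rmono[of x y] m1 ys(2)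
      by (auto simp: m_def intro!: sorted_nth_mono)
  qed
  have MX: "Max X \<in> X" using finX neX by simp
  have "{y\<in>X. y < Max X} = X - {Max X}" using finX Max_ge[OF finX] by (auto simp: order.order_iff_strict)
  then have rM: "r (Max X) = n - 1" unfolding r_def n_def using MX finX by simp
  have FM: "F (Max X) = ys ! (m - 1)" proof -
    have "min (r (Max X)) (m - 1) = m - 1" using rM mn m1 by simp
    then show ?thesis using MX by (simp add: F_def)
  qed
  have "ys ! (m - 1) \<in> set ys" using m1 by (simp add: m_def)
  then have "ys ! (m - 1) \<le> 1" using ys(1) Y01 by (auto simp: Y'_def)
  moreover have "1 \<le> ys ! (m - 1)"
  proof -
    obtain k where "k < m" "ys ! k = 1" using Y'1 ys(1) by (metis in_set_conv_nth m_def)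
    then show ?thesis using ys(2) by (metis diff_less less_Suc_eq_le less_one m1 Suc_pred' gr0I not_one_le_zero sorted_nth_mono m_def le_zero_eq)
  qed
  ultimately have FM1: "F (Max X) = 1" using FM by simp
  have img: "F ` X = Y'"
  proof
    show "F ` X \<subseteq> Y'" using Fv by auto
    show "Y' \<subseteq> F ` X"
    proof
      fix y assume "y \<in> Y'"
      then obtain j where j: "j < m" "ys ! j = y" using ys(1) by (metis in_set_conv_nth m_def)
      then have "j \<in> r ` X" using rimg mn by auto
      then obtain x where x: "x \<in> X" "r x = j" by auto
      then have "F x = y" using j by (simp add: F_def)
      then show "y \<in> F ` X" using x by auto
    qed
  qed
  have "F \<in> cdfs X Y" using FPi Fmono FM1 by (simp add: cdfs_def)
  moreover have "insert 0 (F ` X) = Y" using img Y0 by (auto simp: Y'_def)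
  ultimately show ?thesis by blast
qed

theorem theoremD2:
  fixes X :: "rbar set" and Y :: "real set" and F :: "rbar \<Rightarrow> real"
  assumes "finite X" and "finite Y" and "Y \<subseteq> {0..1}"
    and "card Y \<le> card X + 1" and "{0, 1} \<subseteq> Y"
    and "F \<in> cdfs X Y"
  shows "(\<forall>F' \<in> cdfs X Y. entropy X F' \<le> entropy X F) \<longleftrightarrow> F ` X \<union> {0} = Y"
proof -
  have neX: "X \<noteq> {}"
  proof
    assume "X = {}"
    then have "card Y \<le> 1" using assms by simp
    moreover have "card {0::real, 1} \<le> card Y" using assms by (intro card_mono) auto
    ultimately show False by simp
  qed
  have props: "insert 0 (F' ` X) \<subseteq> Y" "0 \<in> insert 0 (F' ` X)" "1 \<in> insert 0 (F' ` X)"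
    if "F' \<in> cdfs X Y" for F'
  proof -
    have "F' (Max X) = 1" "Max X \<in> X" using that neX assms by (auto simp: cdfs_def)
    then show "1 \<in> insert 0 (F' ` X)" by force
    show "insert 0 (F' ` X) \<subseteq> Y" using that assms by (auto simp: cdfs_def)
    show "0 \<in> insert 0 (F' ` X)" by simp
  qed
  have ent: "entropy X F' = - G (insert 0 (F' ` X))" if "F' \<in> cdfs X Y" for F'
    using entropy_G assms that by blast
  show ?thesis
  proof
    assume H: "\<forall>F' \<in> cdfs X Y. entropy X F' \<le> entropy X F"
    obtain Fs where Fs: "Fs \<in> cdfs X Y" "insert 0 (Fs ` X) = Y"
      using exists_full[OF assms(1) neX assms(2) assms(3)] assms by auto
    show "F ` X \<union> {0} = Y"
    proof (rule ccontr)
      assume "F ` X \<union> {0} \<noteq> Y"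
      then have "insert 0 (F ` X) \<noteq> Y" by auto
      then have "G Y < G (insert 0 (F ` X))"
        using props[OF assms(6)] assms by (intro G_strict) auto
      then have "entropy X F < entropy X Fs" using ent Fs assms(6) by simp
      then show False using H Fs by force
    qed
  next
    assume H: "F ` X \<union> {0} = Y"
    show "\<forall>F' \<in> cdfs X Y. entropy X F' \<le> entropy X F"
    proof
      fix F' assume F': "F' \<in> cdfs X Y"
      have "G (insert 0 (F' ` X) \<union> Y) \<le> G (insert 0 (F' ` X))"
        using props[OF F'] assms finite_subset by (intro G_mono) auto
      moreover have "insert 0 (F' ` X) \<union> Y = Y" using props[OF F'] by auto
      moreover have "insert 0 (F ` X) = Y" using H by auto
      ultimately show "entropy X F' \<le> entropy X F" using ent F' assms(6) by simp
    qed
  qed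
qed

end
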